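(* Fix $\mu>0$. Then \[ \sum_{\substack{a\ge b,\ c\ge d\\ ad-bc=1}}\frac{1}{(a^2+\mu^2b^2)(c^2+\mu^2d^2)\big((a+c)^2+\mu^2(b+d)^2\big)}=\frac{1}{4\mu^2}\left(\frac{2\arctan\mu}{\mu}-\frac{2}{1+\mu^2}\right), \] where the sum is over all nonnegative integers $a,b,c,d$ with $a\ge b$, $c\ge d$ and $ad-bc=1$. *)

theory Defs
  imports "HOL-Analysis.Analysis"
begin

end

theory Submission
  imports Defs
begin


lemma arctan_ge_frac: fixes t::real assumes "t \<ge> 0" shows "t/(1+t^2) \<le> arctan t"
proof -
  have s: "sin (arctan t) * cos (arctan t) = t/(1+t^2)"
  proof -
    have p: "0 \<le> 1 + t^2" by simp
    have "sin (arctan t) * cos (arctan t) = t / (sqrt (1+t^2) * sqrt (1+t^2))"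
      unfolding sin_arctan cos_arctan by simp
    also have "sqrt (1+t^2) * sqrt (1+t^2) = 1 + t^2" using p by (simp only: real_sqrt_mult_self abs_of_nonneg)
    finally show ?thesis .
  qed
  have "sin (arctan t) \<ge> 0" using assms by (simp add: sin_arctan)
  moreover have "cos (arctan t) \<le> 1" by simp
  ultimately have "sin (arctan t) * cos (arctan t) \<le> sin (arctan t)"
    by (simp add: mult_left_le)
  also have "\<dots> \<le> arctan t" using assms by (simp add: sin_x_le_x)
  finally show ?thesis using s by simp
qed

lemma arc_diff:
  fixes a b c d \<mu> :: real
  assumes "\<mu> > 0" "a > 0" "c > 0" "b \<ge> 0" "d \<ge> 0" "a*d - b*c = 1"
  shows "arctan (\<mu>*d/c) - arctan (\<mu>*b/a) = arctan (\<mu>/(a*c+\<mu>^2*b*d))"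
proof -
  define x where "x = \<mu>*d/c"
  define y where "y = \<mu>*b/a"
  have x0: "x \<ge> 0" "y \<ge> 0" using assms by (auto simp: x_def y_def)
  have "arctan x \<ge> 0" "arctan y \<ge> 0" using x0 by auto
  moreover have "arctan x < pi/2" "arctan y < pi/2" by (rule arctan_ubound)+
  ultimately have r: "-(pi/2) < arctan x - arctan y" "arctan x - arctan y < pi/2" by linarith+
  have "cos (arctan x - arctan y) > 0" using r by (intro cos_gt_zero_pi) auto
  then have "tan (arctan x - arctan y) = (x - y)/(1 + x*y)"
    using tan_diff[of "arctan x" "arctan y"] by (simp add: tan_arctan)
  also have "\<dots> = \<mu>/(a*c+\<mu>^2*b*d)"
  proof -
    have "x - y = \<mu>/(a*c)" unfolding x_def y_def using assms
      by (simp add: field_simps)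
    moreover have "1 + x*y = (a*c+\<mu>^2*b*d)/(a*c)" unfolding x_def y_def using assms
      by (simp add: field_simps power2_eq_square)
    moreover have "a*c+\<mu>^2*b*d > 0" using assms by (simp add: add_pos_nonneg)
    ultimately show ?thesis using assms by (simp only:) (simp add: field_simps)
  qed
  finally have "arctan (tan (arctan x - arctan y)) = arctan (\<mu>/(a*c+\<mu>^2*b*d))" by simp
  then show ?thesis using arctan_tan[OF r] by (simp add: x_def y_def)
qed

lemma tele_alg:
  fixes a b c d \<mu> :: real
  assumes mu: "\<mu> > 0" and pv: "a^2+\<mu>^2*b^2 > 0" and pw: "c^2+\<mu>^2*d^2 > 0"
    and ps: "(a+c)^2+\<mu>^2*(b+d)^2 > 0" and det: "a*d - b*c = 1"
  shows "1/((a^2+\<mu>^2*b^2)*(c^2+\<mu>^2*d^2)*((a+c)^2+\<mu>^2*(b+d)^2)) =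
    (1/(2*\<mu>^2))*((a*(a+c)+\<mu>^2*b*(b+d))/((a^2+\<mu>^2*b^2)*((a+c)^2+\<mu>^2*(b+d)^2))
      + ((a+c)*c+\<mu>^2*(b+d)*d)/(((a+c)^2+\<mu>^2*(b+d)^2)*(c^2+\<mu>^2*d^2))
      - (a*c+\<mu>^2*b*d)/((a^2+\<mu>^2*b^2)*(c^2+\<mu>^2*d^2)))"
proof -
  define Qv where "Qv = a^2+\<mu>^2*b^2"
  define Qw where "Qw = c^2+\<mu>^2*d^2"
  define Qs where "Qs = (a+c)^2+\<mu>^2*(b+d)^2"
  have N: "(a*(a+c)+\<mu>^2*b*(b+d))*Qw + ((a+c)*c+\<mu>^2*(b+d)*d)*Qv - (a*c+\<mu>^2*b*d)*Qs
      = 2*\<mu>^2*(a*d-b*c)^2"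
    unfolding Qv_def Qw_def Qs_def by (simp add: power2_eq_square algebra_simps)
  have N2: "(a*(a+c)+\<mu>^2*b*(b+d))*Qw + ((a+c)*c+\<mu>^2*(b+d)*d)*Qv - (a*c+\<mu>^2*b*d)*Qs
      = 2*\<mu>^2" using N det by simp
  have "Qv > 0" "Qw > 0" "Qs > 0" using pv pw ps by (auto simp: Qv_def Qw_def Qs_def)
  then have "(a*(a+c)+\<mu>^2*b*(b+d))/(Qv*Qs) + ((a+c)*c+\<mu>^2*(b+d)*d)/(Qs*Qw) - (a*c+\<mu>^2*b*d)/(Qv*Qw)
     = ((a*(a+c)+\<mu>^2*b*(b+d))*Qw + ((a+c)*c+\<mu>^2*(b+d)*d)*Qv - (a*c+\<mu>^2*b*d)*Qs)/(Qv*Qw*Qs)"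
    by (simp add: field_simps)
  also have "\<dots> = 2*\<mu>^2/(Qv*Qw*Qs)" using N2 by simp
  finally show ?thesis using mu unfolding Qv_def[symmetric] Qw_def[symmetric] Qs_def[symmetric] by simp
qed

lemma key_bounds:
  fixes a b c d \<mu> :: real
  assumes mu: "\<mu> > 0" and "a > 0" "c > 0" "b \<ge> 0" "d \<ge> 0" and det: "a*d - b*c = 1"
  defines "I \<equiv> (arctan (\<mu>*d/c) - arctan (\<mu>*b/a))/\<mu>"
    and "B \<equiv> a*c+\<mu>^2*b*d" and "P \<equiv> (a^2+\<mu>^2*b^2)*(c^2+\<mu>^2*d^2)"
  shows "I \<ge> 0" "B/P \<le> I" "I - B/P \<le> \<mu>^2*I/P"
proof -
  have Bpos: "B > 0" unfolding B_def using assms by (simp add: add_pos_nonneg)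
  have "P - B^2 = \<mu>^2*(a*d-b*c)^2" unfolding P_def B_def by (simp add: power2_eq_square algebra_simps)
  then have PB: "P = B^2 + \<mu>^2" using det by simp
  define t where "t = \<mu>/B"
  have t0: "t > 0" using mu Bpos by (simp add: t_def)
  have It: "I = arctan t / \<mu>" unfolding I_def t_def B_def using arc_diff[OF assms(1-6)] by simp
  show "I \<ge> 0" using It t0 mu by simp
  have dpos: "B*(B*\<mu>) + \<mu>*(\<mu>*\<mu>) > 0" using Bpos mu by (simp add: add_pos_pos)
  have "B/P = (t/(1+t^2))/\<mu>" unfolding PB t_def using Bpos mu dpos
    by (simp add: field_simps power2_eq_square)
  also have "\<dots> \<le> I" unfolding It using divide_right_mono[OF arctan_ge_frac[of t], of \<mu>] t0 mu by simp
  finally show "B/P \<le> I" .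
  have "I \<le> 1/B" unfolding It using arctan_le_self[of t] t0 mu Bpos
    by (simp add: t_def field_simps)
  then have "I * B^2 \<le> B" using Bpos by (simp add: field_simps power2_eq_square)
  then have "I*P - B \<le> \<mu>^2*I" unfolding PB by (simp add: algebra_simps)
  moreover have Pp: "P > 0" unfolding PB using Bpos by (simp add: add_pos_nonneg)
  ultimately have "(I*P - B)/P \<le> \<mu>^2*I/P" by (simp add: divide_right_mono)
  moreover have "(I*P - B)/P = I - B/P" using Pp by (simp add: field_simps)
  ultimately show "I - B/P \<le> \<mu>^2*I/P" by simp
qed



type_synonym quad = "nat \<times> nat \<times> nat \<times> nat"

definition SS :: "quad set" where
  "SS = {(a, b, c, d). b \<le> a \<and> d \<le> c \<and> int a * int d - int b * int c = 1}"

fun ch :: "bool \<Rightarrow> quad \<Rightarrow> quad" where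
  "ch True (a,b,c,d) = (a,b,a+c,b+d)"
| "ch False (a,b,c,d) = (a+c,b+d,c,d)"

fun node :: "bool list \<Rightarrow> quad" where
  "node [] = (1,0,1,1)"
| "node (x#xs) = ch x (node xs)"

lemma ch_SS: "q \<in> SS \<Longrightarrow> ch x q \<in> SS"
  by (cases q; cases x) (auto simp: SS_def algebra_simps)

lemma node_SS: "node xs \<in> SS"
proof (induction xs)
  case Nil then show ?case by (simp add: SS_def)
next
  case (Cons x xs) then show ?case by (simp add: ch_SS)
qed

lemma SS_pos: assumes "(a,b,c,d) \<in> SS" shows "a > 0 \<and> c > 0"
proof -
  have S: "b \<le> a" "d \<le> c" "int a * int d - int b * int c = 1" using assms by (auto simp: SS_def)
  have "a \<noteq> 0"
  proof
    assume "a = 0" then have "b = 0" using S by simp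
    then show False using S \<open>a = 0\<close> by simp
  qed
  moreover have "c \<noteq> 0"
  proof
    assume "c = 0" then have "d = 0" using S by simp
    then show False using S \<open>c = 0\<close> by simp
  qed
  ultimately show ?thesis by simp
qed

lemma ch_inj: "ch x p = ch x q \<Longrightarrow> p = q"
  by (cases p; cases q; cases x) auto

lemma ch_TF: "p \<in> SS \<Longrightarrow> q \<in> SS \<Longrightarrow> ch True p \<noteq> ch False q"
  by (cases p; cases q) (auto simp: SS_def)

lemma ch_root: "p \<in> SS \<Longrightarrow> ch x p \<noteq> (1,0,1,1)"
  by (cases p; cases x) (auto simp: SS_def)

lemma node_inj: "node xs = node ys \<Longrightarrow> xs = ys"
proof (induction xs arbitrary: ys)
  case Nil
  then show ?case using ch_root[OF node_SS] by (cases ys) auto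
next
  case (Cons x xs)
  show ?case
  proof (cases ys)
    case Nil
    then show ?thesis using Cons.prems ch_root[OF node_SS] by auto
  next
    case (Cons y ys')
    have "x = y" using Cons Cons.prems ch_TF[OF node_SS node_SS]
      by (cases x; cases y) (auto dest: sym)
    then show ?thesis using Cons Cons.prems Cons.IH by (auto dest: ch_inj)
  qed
qed

lemma parent_int:
  fixes a b c d :: int
  assumes "0 \<le> b" "b \<le> a" "0 \<le> d" "d \<le> c" "a*d - b*c = 1"
  shows "(c \<le> a \<and> d \<le> b \<and> b - d \<le> a - c) \<or> (a \<le> c \<and> b \<le> d \<and> d - b \<le> c - a)
     \<or> (a = 1 \<and> b = 0 \<and> c = 1 \<and> d = 1)"
proof -
  have a1: "a \<ge> 1"
  proof (rule ccontr)
    assume "\<not> a \<ge> 1" then have "a = 0" "b = 0" using assms by auto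
    then show False using assms by simp
  qed
  have c1: "c \<ge> 1"
  proof (rule ccontr)
    assume "\<not> c \<ge> 1" then have "c = 0" "d = 0" using assms by auto
    then show False using assms by simp
  qed
  consider "c \<le> a" "d \<le> b" | "a \<le> c" "b \<le> d" | "a < c" "d < b" | "c < a" "b < d" by linarith
  then show ?thesis
  proof cases
    case 1
    show ?thesis
    proof (rule ccontr)
      assume "\<not> ?thesis"
      then have Y: "b - d \<ge> (a - c) + 1" using 1 by auto
      have "(b-d)*c \<ge> ((a-c)+1)*c" using Y c1 by (intro mult_right_mono) auto
      moreover have "(a-c)*c \<ge> (a-c)*d" using 1 assms by (intro mult_left_mono) auto
      moreover have "a*d - b*c = (a-c)*d - (b-d)*c" by (simp add: algebra_simps)
      ultimately show False using assms c1 by (simp add: algebra_simps)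
    qed
  next
    case 2
    show ?thesis
    proof (rule ccontr)
      assume "\<not> ?thesis"
      then have Y: "d - b \<ge> (c - a) + 1" and nr: "\<not> (a = 1 \<and> b = 0 \<and> c = 1 \<and> d = 1)" using 2 by auto
      have ab: "a - b \<ge> 1" using Y assms by linarith
      have e: "a*d - b*c = a*(d-b) - b*(c-a)" by (simp add: algebra_simps)
      have "a*(d-b) \<ge> a*((c-a)+1)" using Y a1 by (intro mult_left_mono) auto
      moreover have "(a-b)*(c-a) \<ge> 1*(c-a)" using ab 2 by (intro mult_right_mono) auto
      ultimately have "a*d - b*c \<ge> (c-a) + a" unfolding e by (simp add: algebra_simps)
      then have "c = a" "a = 1" using assms a1 2 by auto
      then have "b = 0" using ab assms by auto
      then have "d = 1" using assms \<open>a = 1\<close> by simp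
      then show False using nr \<open>c = a\<close> \<open>a = 1\<close> \<open>b = 0\<close> by simp
    qed
  next
    case 3
    have "a*d \<le> c*d" using 3 assms by (intro mult_right_mono) auto
    moreover have "b*c \<ge> (d+1)*c" using 3 c1 by (intro mult_right_mono) auto
    ultimately show ?thesis using assms c1 by (simp add: algebra_simps)
  next
    case 4
    have "a*d \<ge> (c+1)*d" using 4 assms by (intro mult_right_mono) auto
    moreover have "b*c \<le> (d-1)*c" using 4 c1 by (intro mult_right_mono) auto
    ultimately show ?thesis using assms c1 4 by (simp add: algebra_simps)
  qed
qed

lemma node_surj: "q \<in> SS \<Longrightarrow> \<exists>xs. node xs = q"
proof (induction "case q of (a,b,c,d) \<Rightarrow> a+b+c+d" arbitrary: q rule: less_induct)
  case less
  obtain a b c d where q: "q = (a,b,c,d)" by (cases q) auto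
  have S: "b \<le> a" "d \<le> c" "int a * int d - int b * int c = 1" using less.prems q by (auto simp: SS_def)
  have pos: "a > 0" "c > 0" using SS_pos less.prems q by auto
  from parent_int[of "int b" "int a" "int d" "int c"] S
  consider "c \<le> a" "d \<le> b" "b - d \<le> a - c" | "a \<le> c" "b \<le> d" "d - b \<le> c - a"
    | "a = 1" "b = 0" "c = 1" "d = 1" by linarith
  then show ?case
  proof cases
    case 1
    define p where "p = (a-c, b-d, c, d)"
    have "p \<in> SS" using 1 S unfolding p_def SS_def
      by (auto simp: of_nat_diff algebra_simps)
    moreover have "(case p of (a,b,c,d) \<Rightarrow> a+b+c+d) < a+b+c+d" using 1 pos by (simp add: p_def)
    ultimately have "\<exists>xs. node xs = p" using less.hyps[of p] q by auto
    then obtain xs where "node xs = p" by blast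
    then have "node (False#xs) = q" using 1 by (simp add: p_def q)
    then show ?thesis by blast
  next
    case 2
    define p where "p = (a, b, c-a, d-b)"
    have "p \<in> SS" using 2 S unfolding p_def SS_def
      by (auto simp: of_nat_diff algebra_simps)
    moreover have "(case p of (a,b,c,d) \<Rightarrow> a+b+c+d) < a+b+c+d" using 2 pos by (simp add: p_def)
    ultimately have "\<exists>xs. node xs = p" using less.hyps[of p] q by auto
    then obtain xs where "node xs = p" by blast
    then have "node (True#xs) = q" using 2 by (simp add: p_def q)
    then show ?thesis by blast
  next
    case 3
    then have "node [] = q" by (simp add: q)
    then show ?thesis by blast
  qed
qed

lemma bij_node: "bij_betw node UNIV SS"
  unfolding bij_betw_def inj_def using node_inj node_SS node_surj by blast


definition ff :: "real \<Rightarrow> quad \<Rightarrow> real" where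
  "ff \<mu> q = (case q of (a,b,c,d) \<Rightarrow>
     1 / ((real a ^ 2 + \<mu>^2 * real b ^ 2) * (real c ^ 2 + \<mu>^2 * real d ^ 2)
                 * ((real a + real c) ^ 2 + \<mu>^2 * (real b + real d) ^ 2)))"

definition Ifn :: "real \<Rightarrow> quad \<Rightarrow> real" where
  "Ifn \<mu> q = (case q of (a,b,c,d) \<Rightarrow> (arctan (\<mu>*real d/real c) - arctan (\<mu>*real b/real a))/\<mu>)"

definition Pfn :: "real \<Rightarrow> quad \<Rightarrow> real" where
  "Pfn \<mu> q = (case q of (a,b,c,d) \<Rightarrow> (real a ^ 2 + \<mu>^2 * real b ^ 2) * (real c ^ 2 + \<mu>^2 * real d ^ 2))"

definition Gfn :: "real \<Rightarrow> quad \<Rightarrow> real" where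
  "Gfn \<mu> q = (case q of (a,b,c,d) \<Rightarrow> (1/(2*\<mu>^2)) * (Ifn \<mu> q - (real a * real c + \<mu>^2 * real b * real d) / Pfn \<mu> q))"

lemma SS_real: assumes "(a,b,c,d) \<in> SS"
  shows "real a > 0" "real c > 0" "real b \<ge> 0" "real d \<ge> 0" "real a * real d - real b * real c = 1"
proof -
  show "real a > 0" "real c > 0" using SS_pos[OF assms] by auto
  show "real b \<ge> 0" "real d \<ge> 0" by auto
  have "int a * int d - int b * int c = 1" using assms by (simp add: SS_def)
  then have "real_of_int (int a * int d - int b * int c) = 1" by simp
  then show "real a * real d - real b * real c = 1" by simp
qed

lemma I_add: "Ifn \<mu> q = Ifn \<mu> (ch True q) + Ifn \<mu> (ch False q)"
  by (cases q) (simp add: Ifn_def diff_divide_distrib)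

lemma G_bounds:
  assumes mu: "\<mu> > 0" and q: "q \<in> SS"
  shows "0 \<le> Ifn \<mu> q" "0 \<le> Gfn \<mu> q" "Gfn \<mu> q \<le> Ifn \<mu> q / (2 * Pfn \<mu> q)"
proof -
  obtain a b c d where qq: "q = (a,b,c,d)" by (cases q) auto
  note R = SS_real[OF q[unfolded qq]]
  note K = key_bounds[OF mu R]
  show "0 \<le> Ifn \<mu> q" using K(1) by (simp add: qq Ifn_def)
  show "0 \<le> Gfn \<mu> q" using K(2) mu by (simp add: qq Gfn_def Ifn_def Pfn_def)
  define B where "B = real a * real c + \<mu>^2 * real b * real d"
  have K3: "Ifn \<mu> q - B / Pfn \<mu> q \<le> \<mu>^2 * Ifn \<mu> q / Pfn \<mu> q"
    using K(3) unfolding qq Ifn_def Pfn_def B_def by simp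
  have "Gfn \<mu> q = (1/(2*\<mu>^2)) * (Ifn \<mu> q - B / Pfn \<mu> q)"
    unfolding B_def by (simp add: qq Gfn_def)
  also have "\<dots> \<le> (1/(2*\<mu>^2)) * (\<mu>^2 * Ifn \<mu> q / Pfn \<mu> q)"
    using K3 by (intro mult_left_mono) auto
  also have "\<dots> = Ifn \<mu> q / (2 * Pfn \<mu> q)" using mu by (simp add: field_simps)
  finally show "Gfn \<mu> q \<le> Ifn \<mu> q / (2 * Pfn \<mu> q)" .
qed

lemma G_tele:
  assumes mu: "\<mu> > 0" and q: "q \<in> SS"
  shows "ff \<mu> q = Gfn \<mu> q - Gfn \<mu> (ch True q) - Gfn \<mu> (ch False q)"
proof -
  obtain a b c d where qq: "q = (a,b,c,d)" by (cases q) auto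
  note R = SS_real[OF q[unfolded qq]]
  have pv: "real a ^ 2 + \<mu>^2 * real b ^ 2 > 0" using R by (simp add: add_pos_nonneg)
  have pw: "real c ^ 2 + \<mu>^2 * real d ^ 2 > 0" using R by (simp add: add_pos_nonneg)
  have ps: "(real a + real c) ^ 2 + \<mu>^2 * (real b + real d) ^ 2 > 0" using R by (simp add: add_pos_nonneg)
  note T = tele_alg[OF mu pv pw ps R(5)]
  have Ie: "Ifn \<mu> q - Ifn \<mu> (ch True q) - Ifn \<mu> (ch False q) = 0" using I_add[of \<mu> q] by simp
  define I0 where "I0 = Ifn \<mu> q"
  define I1 where "I1 = Ifn \<mu> (ch True q)"
  define I2 where "I2 = Ifn \<mu> (ch False q)"
  have "Gfn \<mu> q - Gfn \<mu> (ch True q) - Gfn \<mu> (ch False q) =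
    (1/(2*\<mu>^2)) * (I0 - (real a * real c + \<mu>^2 * real b * real d) / ((real a ^ 2 + \<mu>^2 * real b ^ 2) * (real c ^ 2 + \<mu>^2 * real d ^ 2)))
   - (1/(2*\<mu>^2)) * (I1 - (real a * (real a + real c) + \<mu>^2 * real b * (real b + real d)) / ((real a ^ 2 + \<mu>^2 * real b ^ 2) * ((real a + real c) ^ 2 + \<mu>^2 * (real b + real d) ^ 2)))
   - (1/(2*\<mu>^2)) * (I2 - ((real a + real c) * real c + \<mu>^2 * (real b + real d) * real d) / (((real a + real c) ^ 2 + \<mu>^2 * (real b + real d) ^ 2) * (real c ^ 2 + \<mu>^2 * real d ^ 2)))"
    unfolding I0_def I1_def I2_def by (simp add: qq Gfn_def Pfn_def)
  also have "\<dots> = (1/(2*\<mu>^2))*((real a * (real a + real c) + \<mu>^2 * real b * (real b + real d)) / ((real a ^ 2 + \<mu>^2 * real b ^ 2) * ((real a + real c) ^ 2 + \<mu>^2 * (real b + real d) ^ 2))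
      + ((real a + real c) * real c + \<mu>^2 * (real b + real d) * real d) / (((real a + real c) ^ 2 + \<mu>^2 * (real b + real d) ^ 2) * (real c ^ 2 + \<mu>^2 * real d ^ 2))
      - (real a * real c + \<mu>^2 * real b * real d) / ((real a ^ 2 + \<mu>^2 * real b ^ 2) * (real c ^ 2 + \<mu>^2 * real d ^ 2)))"
    using Ie unfolding I0_def[symmetric] I1_def[symmetric] I2_def[symmetric] by (simp add: algebra_simps add_divide_distrib)
  also have "\<dots> = ff \<mu> q" unfolding T[symmetric]
    by (simp add: qq ff_def)
  finally show ?thesis by simp
qed



abbreviation Lev :: "nat \<Rightarrow> bool list set" where "Lev n \<equiv> {xs. length xs = n}"

lemma finite_Lev: "finite (Lev n)"
  using finite_lists_length_eq[of "UNIV::bool set" n] by simp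

lemma finite_T: "finite {xs::bool list. length xs < N}"
proof -
  have A: "{xs::bool list. length xs < N} \<subseteq> {xs. set xs \<subseteq> UNIV \<and> length xs \<le> N}" by auto
  have B: "finite {xs::bool list. set xs \<subseteq> UNIV \<and> length xs \<le> N}" by (rule finite_lists_length_le) simp
  show ?thesis using finite_subset[OF A B] .
qed

lemma Lev_Suc: "Lev (Suc n) = Cons True ` Lev n \<union> Cons False ` Lev n"
proof -
  have "xs \<in> Cons True ` Lev n \<union> Cons False ` Lev n" if l: "length xs = Suc n" for xs
  proof -
    obtain y ys where "xs = y # ys" "length ys = n" using l by (cases xs) auto
    then show ?thesis by (cases y) auto
  qed
  then show ?thesis by auto
qed

lemma sum_Lev_Suc: "sum h (Lev (Suc n)) = (\<Sum>xs\<in>Lev n. h (True#xs) + h (False#xs))"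
proof -
  have "sum h (Lev (Suc n)) = sum h (Cons True ` Lev n) + sum h (Cons False ` Lev n)"
    unfolding Lev_Suc by (rule sum.union_disjoint) (auto simp: finite_Lev)
  also have "\<dots> = (\<Sum>xs\<in>Lev n. h (True#xs)) + (\<Sum>xs\<in>Lev n. h (False#xs))"
    by (simp add: sum.reindex)
  finally show ?thesis by (simp add: sum.distrib)
qed

lemma Lev0: "Lev 0 = {[]}" by auto

lemma J_const: "(\<Sum>xs\<in>Lev n. Ifn \<mu> (node xs)) = Ifn \<mu> (1,0,1,1)"
proof (induction n)
  case 0 then show ?case by (simp add: Lev0)
next
  case (Suc n)
  have "(\<Sum>xs\<in>Lev (Suc n). Ifn \<mu> (node xs)) = (\<Sum>xs\<in>Lev n. Ifn \<mu> (node (True#xs)) + Ifn \<mu> (node (False#xs)))"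
    by (rule sum_Lev_Suc)
  also have "\<dots> = (\<Sum>xs\<in>Lev n. Ifn \<mu> (node xs))"
    by (rule sum.cong) (auto simp only: node.simps I_add[symmetric])
  finally show ?case using Suc by simp
qed

definition sz :: "quad \<Rightarrow> nat" where "sz q = (case q of (a,b,c,d) \<Rightarrow> (a+b)*(c+d))"

lemma sz_node: "sz (node xs) \<ge> length xs + 1"
proof (induction xs)
  case Nil then show ?case by (simp add: sz_def)
next
  case (Cons x xs)
  obtain a b c d where q: "node xs = (a,b,c,d)" by (cases "node xs") auto
  have pos: "a > 0" "c > 0" using SS_pos node_SS[of xs] q by auto
  have IH: "(a+b)*(c+d) \<ge> length xs + 1" using Cons q by (simp add: sz_def)
  show ?case
  proof (cases x)
    case True
    have "(a+b)*(a+c+(b+d)) = (a+b)*(a+b) + (a+b)*(c+d)" by (simp add: algebra_simps)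
    moreover have "(a+b)*(a+b) \<ge> 1" using pos by (simp add: Suc_le_eq)
    ultimately have "length xs + 2 \<le> (a+b)*(a+c+(b+d))" using IH by linarith
    then show ?thesis using True q by (simp add: sz_def)
  next
    case False
    have "(a+c+(b+d))*(c+d) = (a+b)*(c+d) + (c+d)*(c+d)" by (simp add: algebra_simps)
    moreover have "(c+d)*(c+d) \<ge> 1" using pos by (simp add: Suc_le_eq)
    ultimately have "length xs + 2 \<le> (a+c+(b+d))*(c+d)" using IH by linarith
    then show ?thesis using False q by (simp add: sz_def)
  qed
qed

lemma Q_lower:
  fixes x y m \<mu> :: real
  assumes "0 < m" "m \<le> 1" "m \<le> \<mu>^2" "x \<ge> 0" "y \<ge> 0" "x + y \<ge> 1"
  shows "x^2 + \<mu>^2*y^2 \<ge> m*(x+y)/2"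
proof -
  have h0: "m*x^2 \<le> x^2" using assms by (simp add: mult_left_le_one_le)
  have h1: "m*y^2 \<le> \<mu>^2*y^2" using assms by (simp add: mult_right_mono)
  have "0 \<le> (x-y)^2" by simp
  then have h2: "(x+y)^2 \<le> 2*(x^2+y^2)" by (simp add: power2_eq_square algebra_simps)
  have "(x+y)*1 \<le> (x+y)*(x+y)" using assms by (intro mult_left_mono) auto
  then have h3: "x + y \<le> 2*(x^2+y^2)" using h2 by (simp add: power2_eq_square)
  have "m*(x+y) \<le> m*(2*(x^2+y^2))" using h3 assms by (intro mult_left_mono) auto
  also have "\<dots> = 2*(m*x^2 + m*y^2)" by (simp add: algebra_simps)
  also have "\<dots> \<le> 2*(x^2 + \<mu>^2*y^2)" using h0 h1 by simp
  finally show ?thesis by simp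
qed

definition Lsum :: "real \<Rightarrow> nat \<Rightarrow> real" where
  "Lsum \<mu> n = (\<Sum>xs\<in>Lev n. Gfn \<mu> (node xs))"

lemma f_Lev:
  assumes mu: "\<mu> > 0"
  shows "(\<Sum>xs\<in>Lev n. ff \<mu> (node xs)) = Lsum \<mu> n - Lsum \<mu> (Suc n)"
proof -
  have "Lsum \<mu> (Suc n) = (\<Sum>xs\<in>Lev n. Gfn \<mu> (node (True#xs)) + Gfn \<mu> (node (False#xs)))"
    unfolding Lsum_def by (rule sum_Lev_Suc)
  then have "Lsum \<mu> n - Lsum \<mu> (Suc n) = (\<Sum>xs\<in>Lev n. Gfn \<mu> (node xs) - (Gfn \<mu> (node (True#xs)) + Gfn \<mu> (node (False#xs))))"
    unfolding Lsum_def by (simp add: sum_subtractf)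
  also have "\<dots> = (\<Sum>xs\<in>Lev n. ff \<mu> (node xs))"
    by (rule sum.cong) (auto simp: G_tele[OF mu node_SS])
  finally show ?thesis by simp
qed

lemma T_sum:
  assumes mu: "\<mu> > 0"
  shows "(\<Sum>xs\<in>{xs::bool list. length xs < N}. ff \<mu> (node xs)) = Lsum \<mu> 0 - Lsum \<mu> N"
proof (induction N)
  case 0 then show ?case by simp
next
  case (Suc N)
  have e: "{xs::bool list. length xs < Suc N} = {xs. length xs < N} \<union> Lev N" by auto
  have "(\<Sum>xs\<in>{xs::bool list. length xs < Suc N}. ff \<mu> (node xs))
      = (\<Sum>xs\<in>{xs::bool list. length xs < N}. ff \<mu> (node xs)) + (\<Sum>xs\<in>Lev N. ff \<mu> (node xs))"
    unfolding e by (rule sum.union_disjoint) (auto simp: finite_T finite_Lev)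
  then show ?case using Suc f_Lev[OF mu, of N] by simp
qed

lemma L_nonneg: "\<mu> > 0 \<Longrightarrow> 0 \<le> Lsum \<mu> n"
  unfolding Lsum_def by (intro sum_nonneg) (auto intro: G_bounds(2)[OF _ node_SS])

lemma P_lower:
  assumes mu: "\<mu> > 0" and q: "q \<in> SS"
  shows "Pfn \<mu> q \<ge> (min 1 (\<mu>^2))^2 * real (sz q) / 4"
proof -
  obtain a b c d where qq: "q = (a,b,c,d)" by (cases q) auto
  define m where "m = min 1 (\<mu>^2)"
  have m: "0 < m" "m \<le> 1" "m \<le> \<mu>^2" using mu by (auto simp: m_def)
  have pos: "a > 0" "c > 0" using SS_pos q qq by auto
  have Q1: "real a ^ 2 + \<mu>^2 * real b ^ 2 \<ge> m*(real a + real b)/2"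
    using pos by (intro Q_lower m) auto
  have Q2: "real c ^ 2 + \<mu>^2 * real d ^ 2 \<ge> m*(real c + real d)/2"
    using pos by (intro Q_lower m) auto
  have "(m*(real a + real b)/2) * (m*(real c + real d)/2) \<le> (real a ^ 2 + \<mu>^2 * real b ^ 2) * (real c ^ 2 + \<mu>^2 * real d ^ 2)"
    by (rule mult_mono[OF Q1 Q2]) (use m in auto)
  then have "(m*(real a + real b)/2) * (m*(real c + real d)/2) \<le> Pfn \<mu> q"
    by (simp add: qq Pfn_def)
  moreover have "(m*(real a + real b)/2) * (m*(real c + real d)/2) = m^2 * real (sz q) / 4"
    by (simp add: qq sz_def power2_eq_square)
  ultimately show ?thesis by (simp add: m_def)
qed

lemma L_upper:
  assumes mu: "\<mu> > 0"
  shows "Lsum \<mu> n \<le> (2 / (min 1 (\<mu>^2))^2) * Ifn \<mu> (1,0,1,1) / (real n + 1)"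
proof -
  define m where "m = min 1 (\<mu>^2)"
  have m: "0 < m" using mu by (auto simp: m_def)
  define K where "K = 2 / (m^2 * (real n + 1))"
  have "Gfn \<mu> (node xs) \<le> K * Ifn \<mu> (node xs)" if "xs \<in> Lev n" for xs
  proof -
    have I0: "0 \<le> Ifn \<mu> (node xs)" using G_bounds(1)[OF mu node_SS] .
    have "real (sz (node xs)) \<ge> real n + 1" using sz_node[of xs] that by simp
    then have "m^2 * real (sz (node xs)) / 4 \<ge> m^2 * (real n + 1) / 4" using m
      by (simp add: divide_right_mono mult_left_mono)
    then have Pl: "Pfn \<mu> (node xs) \<ge> m^2 * (real n + 1) / 4"
      using P_lower[OF mu node_SS, of xs] unfolding m_def by linarith
    have mp: "m^2 * (real n + 1) / 4 > 0" using m by simp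
    have "1 / (2 * Pfn \<mu> (node xs)) \<le> 1 / (2 * (m^2 * (real n + 1) / 4))"
    proof -
      have Pp: "Pfn \<mu> (node xs) > 0" using Pl mp by linarith
      have A: "2 * (m^2 * (real n + 1) / 4) \<le> 2 * Pfn \<mu> (node xs)" using Pl by linarith
      have B: "0 < 2 * Pfn \<mu> (node xs) * (2 * (m^2 * (real n + 1) / 4))"
        using Pp mp by (intro mult_pos_pos) auto
      show ?thesis by (rule divide_left_mono[OF A _ B]) simp
    qed
    also have "\<dots> = K" unfolding K_def using mp by (simp add: field_simps)
    finally have "Ifn \<mu> (node xs) * (1 / (2 * Pfn \<mu> (node xs))) \<le> Ifn \<mu> (node xs) * K"
      using I0 by (intro mult_left_mono) auto
    then show ?thesis using G_bounds(3)[OF mu node_SS, of xs] by (simp add: mult.commute)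
  qed
  then have "Lsum \<mu> n \<le> (\<Sum>xs\<in>Lev n. K * Ifn \<mu> (node xs))"
    unfolding Lsum_def by (intro sum_mono) auto
  also have "\<dots> = K * Ifn \<mu> (1,0,1,1)" by (simp add: sum_distrib_left[symmetric] J_const)
  also have "\<dots> = (2 / m^2) * Ifn \<mu> (1,0,1,1) / (real n + 1)" unfolding K_def by simp
  finally show ?thesis by (simp add: m_def)
qed



lemma ff_nonneg: "0 \<le> ff \<mu> q"
  by (cases q) (auto simp: ff_def intro!: divide_nonneg_nonneg mult_nonneg_nonneg add_nonneg_nonneg)

lemma main_has_sum:
  assumes mu: "\<mu> > 0"
  shows "((\<lambda>xs. ff \<mu> (node xs)) has_sum Gfn \<mu> (1,0,1,1)) UNIV"
proof -
  define g where "g = (\<lambda>xs. ff \<mu> (node xs))"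
  define G0 where "G0 = Gfn \<mu> (1,0,1,1)"
  have L0: "Lsum \<mu> 0 = G0" by (simp add: Lsum_def Lev0 G0_def)
  have gnn: "0 \<le> g xs" for xs by (simp add: g_def ff_nonneg)
  have Tsum: "sum g {xs. length xs < N} = G0 - Lsum \<mu> N" for N
    using T_sum[OF mu, of N] L0 by (simp add: g_def)
  have fb: "sum g F \<le> G0" if F: "finite F" for F
  proof -
    define N where "N = Suc (Max (length ` F))"
    have "F \<subseteq> {xs. length xs < N}" using F by (auto simp: N_def le_imp_less_Suc)
    then have "sum g F \<le> sum g {xs. length xs < N}"
      by (intro sum_mono2 finite_T) (auto simp: gnn)
    also have "\<dots> \<le> G0" using Tsum[of N] L_nonneg[OF mu, of N] by simp
    finally show ?thesis .
  qed
  have summ: "g summable_on UNIV"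
    by (rule nonneg_bdd_above_summable_on) (auto simp: gnn fb intro!: bdd_aboveI[of _ G0])
  have up: "infsum g UNIV \<le> G0" by (rule infsum_le_finite_sums[OF summ]) (simp add: fb)
  have low: "G0 - Lsum \<mu> N \<le> infsum g UNIV" for N
    using finite_sum_le_infsum[OF summ finite_T[of N]] gnn Tsum[of N] by simp
  define C where "C = (2 / (min 1 (\<mu>^2))^2) * Ifn \<mu> (1,0,1,1)"
  have C0: "C \<ge> 0" unfolding C_def using G_bounds(1)[OF mu node_SS[of "[]"]] by simp
  have LC: "Lsum \<mu> N \<le> C / (real N + 1)" for N using L_upper[OF mu, of N] by (simp add: C_def)
  have "G0 \<le> infsum g UNIV"
  proof (rule ccontr)
    assume "\<not> ?thesis"
    then have e: "G0 - infsum g UNIV > 0" by simp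
    obtain N :: nat where N: "C / (G0 - infsum g UNIV) < real N" using reals_Archimedean2 by blast
    then have "C < (G0 - infsum g UNIV) * real N" using e by (simp add: field_simps)
    also have "\<dots> \<le> (G0 - infsum g UNIV) * (real N + 1)" using e by simp
    finally have "C / (real N + 1) < G0 - infsum g UNIV" by (simp add: field_simps)
    then show False using LC[of N] low[of N] by linarith
  qed
  then have "infsum g UNIV = G0" using up by simp
  then show ?thesis using summ has_sum_iff unfolding g_def G0_def by blast
qed

theorem theorem9:
  fixes \<mu> :: real
  assumes "\<mu> > 0"
  shows "((\<lambda>(a::nat, b::nat, c::nat, d::nat).
            1 / ((real a ^ 2 + \<mu>^2 * real b ^ 2) * (real c ^ 2 + \<mu>^2 * real d ^ 2)
                 * ((real a + real c) ^ 2 + \<mu>^2 * (real b + real d) ^ 2)))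
         has_sum (1 / (4 * \<mu>^2) * (2 * arctan \<mu> / \<mu> - 2 / (1 + \<mu>^2))))
         {(a, b, c, d). b \<le> a \<and> d \<le> c \<and> int a * int d - int b * int c = 1}"
proof -
  have h1: "(ff \<mu> has_sum Gfn \<mu> (1,0,1,1)) SS"
    using main_has_sum[OF assms] has_sum_reindex_bij_betw[OF bij_node, of "ff \<mu>"] by simp
  have h2: "Gfn \<mu> (1,0,1,1) = 1 / (4 * \<mu>^2) * (2 * arctan \<mu> / \<mu> - 2 / (1 + \<mu>^2))"
    using assms by (simp add: Gfn_def Ifn_def Pfn_def field_simps)
  have h3: "ff \<mu> = (\<lambda>(a::nat, b::nat, c::nat, d::nat).
            1 / ((real a ^ 2 + \<mu>^2 * real b ^ 2) * (real c ^ 2 + \<mu>^2 * real d ^ 2)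
                 * ((real a + real c) ^ 2 + \<mu>^2 * (real b + real d) ^ 2)))"
    by (rule ext) (simp add: ff_def)
  from h1 have "(ff \<mu> has_sum (1 / (4 * \<mu>^2) * (2 * arctan \<mu> / \<mu> - 2 / (1 + \<mu>^2)))) SS"
    by (simp only: h2)
  then show ?thesis unfolding h3 SS_def .
qed

end
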